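(* There exist finite alphabets $\Sigma,\Gamma$, a tier $\tau$ on $\Sigma\times\Gamma^*$ and an SFST $T$ with input alphabet $\Sigma$ and output alphabet $\Gamma$ that is $2$-TSSL on tier $\tau$, such that the function $f$ computed by $T$ is not $k$-TSSL on tier $\upsilon$ for any $k>0$ and any tier $\upsilon$ on $\Sigma\times\Gamma^*$.
   Context: Strings: $\lambda$ is the empty string; $\rtimes$ is a boundary symbol not in any alphabet. For $m\ge0$, $\mathrm{suff}^m(x)$ is the string of the last $m$ symbols of $\rtimes^mx$. $\mathrm{lcp}(A)$ is the longest common prefix of a set of strings $A$. An SFST is $T=\langle Q,\Sigma,\Gamma,q_0,\to,\sigma\rangle$ with finite state set $Q$, start state $q_0$, transition function $\to:Q\times\Sigma\to Q\times\Gamma^*$ and final output function $\sigma:Q\to\Gamma^*$. Write $q\xrightarrow{a:y}r$ if $\to(q,a)=\langle r,y\rangle$, extended to strings by $q\xrightarrow{\lambda:\lambda}q$ and composition (concatenating outputs). $T$ computes $f$ if $f(x)=y\sigma(q)$ whenever $q_0\xrightarrow{x:y}q$. (No onwardness is required of $T$.) A tier on a (possibly infinite) alphabet $A$ is a homomorphism $\tau:A^*\to A^*$ with $\tau(a)\in\{a,\lambda\}$ for each $a\in A$; it is extended to $\rtimes$ by $\tau(\rtimes)=\rtimes$. Actions of an SFST $T$: $\mathbb{A}_T:=\{\langle x,y\rangle\mid\exists q\,\exists r.\ \to(q,x)=\langle r,y\rangle\}$, written $x:y$. $T$ is $k$-TSSL on a tier $\tau$ on $\Sigma\times\Gamma^*$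 if $Q=(\{\rtimes\}\cup\mathbb{A}_T)^{k-1}$, $q_0=\rtimes^{k-1}$, and for every $q\in Q$, if $\to(q,x)=\langle r,y\rangle$ then $r=\mathrm{suff}^{k-1}(\tau(q(x:y)))$. For $f:\Sigma^*\to\Gamma^*$: $f^{\gets}(x):=\mathrm{lcp}(\{f(xy)\mid y\in\Sigma^*\})$; $f^{\to}_x$ is defined by $f(xy)=f^{\gets}(x)f^{\to}_x(y)$. Actions of $f$: $\mathbb{A}_f:=\{\langle x,y\rangle\in\Sigma\times\Gamma^*\mid\exists z.\ f^{\gets}(zx)=f^{\gets}(z)y\}$. Run $f^{\Leftarrow}(x)$: if $|x|\le1$, $f^{\Leftarrow}(x):=x:f^{\gets}(x)$; if $x=yz$ with $|y|\ge1$, $|z|=1$, $f^{\Leftarrow}(x):=f^{\Leftarrow}(y)(z:w)$ where $f^{\gets}(x)=f^{\gets}(y)w$. The function $f$ is $k$-TSSL on a tier $\upsilon$ on $\Sigma\times\Gamma^*$ if for all $x,y\in\Sigma^*$, $\mathrm{suff}^{k-1}(\upsilon(f^{\Leftarrow}(x)))=\mathrm{suff}^{k-1}(\upsilon(f^{\Leftarrow}(y)))$ implies $f^{\to}_x=f^{\to}_y$. *)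

theory Defs
  imports Main "HOL-Library.Sublist"
begin

text \<open>An action x:y is a pair (x, y) :: nat \<times> nat list.  Strings over
  the tier alphabet extended with the boundary symbol are lists of
  (nat \<times> nat list) option, where None is the boundary symbol.\<close>

type_synonym action = "nat \<times> nat list"
type_synonym bsym = "action option"

definition strings :: "nat set \<Rightarrow> nat list set" where
  "strings S = {x. set x \<subseteq> S}"

definition suff :: "nat \<Rightarrow> bsym list \<Rightarrow> bsym list" where
  "suff m x = drop (length x) (replicate m None @ x)"

text \<open>A tier on the alphabet of actions is given by the set (predicate) of
  symbols it keeps; the boundary symbol is always kept.\<close>
definition tier :: "(action \<Rightarrow> bool) \<Rightarrow> bsym list \<Rightarrow> bsym list" where
  "tier keep xs = filter (\<lambda>s. case s of None \<Rightarrow> True | Some a \<Rightarrow> keep a) xs"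

definition lcp :: "'a list set \<Rightarrow> 'a list" where
  "lcp A = (THE w. (\<forall>v\<in>A. prefix w v) \<and> (\<forall>u. (\<forall>v\<in>A. prefix u v) \<longrightarrow> prefix u w))"

record 'q sfst =
  states :: "'q set"
  inp    :: "nat set"
  outp   :: "nat set"
  init   :: 'q
  trans  :: "'q \<Rightarrow> nat \<Rightarrow> 'q \<times> nat list"
  final  :: "'q \<Rightarrow> nat list"

definition is_sfst :: "'q sfst \<Rightarrow> bool" where
  "is_sfst T \<longleftrightarrow> finite (states T) \<and> init T \<in> states T \<and>
     (\<forall>q\<in>states T. \<forall>a\<in>inp T. fst (trans T q a) \<in> states T \<and> set (snd (trans T q a)) \<subseteq> outp T) \<and>
     (\<forall>q\<in>states T. set (final T q) \<subseteq> outp T)"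

fun sfst_run :: "'q sfst \<Rightarrow> 'q \<Rightarrow> nat list \<Rightarrow> 'q \<times> nat list" where
  "sfst_run T q [] = (q, [])"
| "sfst_run T q (a # x) =
     (let (r, y) = trans T q a; (s, z) = sfst_run T r x in (s, y @ z))"

definition sfst_fun :: "'q sfst \<Rightarrow> nat list \<Rightarrow> nat list" where
  "sfst_fun T x = (let (q, y) = sfst_run T (init T) x in y @ final T q)"

definition sfst_actions :: "'q sfst \<Rightarrow> action set" where
  "sfst_actions T = {(a, y). \<exists>q\<in>states T. \<exists>r. a \<in> inp T \<and> trans T q a = (r, y)}"

definition sfst_TSSL :: "nat \<Rightarrow> (action \<Rightarrow> bool) \<Rightarrow> bsym list sfst \<Rightarrow> bool" where
  "sfst_TSSL k keep T \<longleftrightarrow>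
     states T = {q. length q = k - 1 \<and> set q \<subseteq> insert None (Some ` sfst_actions T)} \<and>
     init T = replicate (k - 1) None \<and>
     (\<forall>q\<in>states T. \<forall>a\<in>inp T. \<forall>r y. trans T q a = (r, y) \<longrightarrow>
         r = suff (k - 1) (tier keep (q @ [Some (a, y)])))"

definition fpre :: "nat set \<Rightarrow> (nat list \<Rightarrow> nat list) \<Rightarrow> nat list \<Rightarrow> nat list" where
  "fpre S f x = lcp {f (x @ y) | y. y \<in> strings S}"

definition fpost :: "nat set \<Rightarrow> (nat list \<Rightarrow> nat list) \<Rightarrow> nat list \<Rightarrow> nat list \<Rightarrow> nat list" where
  "fpost S f x y = drop (length (fpre S f x)) (f (x @ y))"

definition frun :: "nat set \<Rightarrow> (nat list \<Rightarrow> nat list) \<Rightarrow> nat list \<Rightarrow> action list" where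
  "frun S f x = map (\<lambda>i. if i = 0 then (x ! 0, fpre S f (take 1 x))
        else (x ! i, drop (length (fpre S f (take i x))) (fpre S f (take (Suc i) x))))
      [0..<length x]"

definition fun_TSSL :: "nat set \<Rightarrow> nat \<Rightarrow> (action \<Rightarrow> bool) \<Rightarrow> (nat list \<Rightarrow> nat list) \<Rightarrow> bool" where
  "fun_TSSL S k keep f \<longleftrightarrow>
     (\<forall>x\<in>strings S. \<forall>y\<in>strings S.
        suff (k - 1) (tier keep (map Some (frun S f x))) = suff (k - 1) (tier keep (map Some (frun S f y)))
        \<longrightarrow> (\<forall>z\<in>strings S. fpost S f x z = fpost S f y z))"

end

theory Submission
  imports Defs
begin

definition AA :: action where "AA = (0, [])"
definition BB :: action where "BB = (0, [1,1])"

definition TT :: "bsym list sfst" where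
  "TT = \<lparr>states = {[None],[Some AA],[Some BB]}, inp = {0}, outp = {1,2,3},
     init = [None],
     trans = (\<lambda>q a. if q = [Some AA] then ([Some BB],[1,1]) else ([Some AA],[])),
     final = (\<lambda>q. if q = [Some AA] then [1,3] else [2])\<rparr>"

definition ff :: "nat list \<Rightarrow> nat list" where "ff = sfst_fun TT"

lemma run_snoc: "sfst_run T q (xs @ [a]) =
   (let (r, y) = sfst_run T q xs; (s, z) = trans T r a in (s, y @ z))"
  by (induction xs arbitrary: q) (auto split: prod.splits)

definition stn :: "nat \<Rightarrow> bsym list" where
  "stn n = (if n = 0 then [None] else if odd n then [Some AA] else [Some BB])"

lemma run_rep: "sfst_run TT [None] (replicate n 0) =
   (stn n, replicate (if even n then n else n - 1) 1)"
proof (induction n)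
  case 0 then show ?case by (simp add: stn_def)
next
  case (Suc n)
  have "replicate (Suc n) (0::nat) = replicate n 0 @ [0]" by (simp add: replicate_append_same)
  then show ?case using Suc
    apply (simp add: run_snoc TT_def stn_def AA_def BB_def)
    apply (cases n) apply simp
    apply (auto simp: replicate_append_same[symmetric])
    done
qed

lemma ff_rep: "ff (replicate n 0) = replicate n 1 @ [if even n then 2 else 3]"
proof -
  have "ff (replicate n 0) = (let (q, y) = sfst_run TT [None] (replicate n 0) in y @ final TT q)"
    by (simp add: ff_def sfst_fun_def TT_def)
  also have "\<dots> = replicate (if even n then n else n - 1) 1 @ final TT (stn n)"
    by (simp add: run_rep)
  finally show ?thesis
    by (cases n) (auto simp: TT_def stn_def AA_def BB_def replicate_append_same[symmetric])
qed

lemma lcp_eq: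
  assumes "\<forall>v\<in>A. prefix w v" "\<forall>u. (\<forall>v\<in>A. prefix u v) \<longrightarrow> prefix u w"
  shows "lcp A = w"
  unfolding lcp_def
  apply (rule the_equality)
  using assms apply blast
  using assms by (meson prefix_order.antisym)

lemma strings0: "strings {0} = range (\<lambda>m. replicate m 0)"
  unfolding strings_def
proof (intro set_eqI iffI)
  fix x assume "x \<in> {x. set x \<subseteq> {0::nat}}"
  then have "x = replicate (length x) 0" by (intro replicate_eqI) auto
  then show "x \<in> range (\<lambda>m. replicate m 0)" by blast
qed auto

lemma fpre_rep: "fpre {0} ff (replicate n 0) = replicate n 1"
proof -
  have S: "{ff (replicate n 0 @ y) | y. y \<in> strings {0}} = {ff (replicate (n+m) 0) | m. True}"
  proof (intro set_eqI iffI)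
    fix v assume "v \<in> {ff (replicate n 0 @ y) | y. y \<in> strings {0}}"
    then obtain m where "v = ff (replicate n 0 @ replicate m 0)" unfolding strings0 by blast
    then have "v = ff (replicate (n+m) 0)" by (simp only: replicate_add)
    then show "v \<in> {ff (replicate (n+m) 0) | m. True}" by blast
  next
    fix v assume "v \<in> {ff (replicate (n+m) 0) | m. True}"
    then obtain m where "v = ff (replicate (n+m) 0)" by blast
    then have "v = ff (replicate n 0 @ replicate m 0)" by (simp only: replicate_add)
    moreover have "replicate m 0 \<in> strings {0}" unfolding strings0 by blast
    ultimately show "v \<in> {ff (replicate n 0 @ y) | y. y \<in> strings {0}}" by blast
  qed
  show ?thesis unfolding fpre_def S
  proof (rule lcp_eq)
    show "\<forall>v\<in>{ff (replicate (n + m) 0) |m. True}. prefix (replicate n 1) v"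
    proof
      fix v assume "v \<in> {ff (replicate (n + m) 0) |m. True}"
      then obtain m where "v = ff (replicate (n + m) 0)" by blast
      then have "v = replicate (n+m) 1 @ [if even (n+m) then 2 else 3]"
        by (simp only: ff_rep)
      then show "prefix (replicate n 1) v" by (simp add: replicate_add)
    qed
    show "\<forall>u. (\<forall>v\<in>{ff (replicate (n + m) 0) |m. True}. prefix u v) \<longrightarrow> prefix u (replicate n 1)"
    proof (intro allI impI)
      fix u assume h: "\<forall>v\<in>{ff (replicate (n + m) 0) |m. True}. prefix u v"
      have m0: "ff (replicate (n+0) 0) \<in> {ff (replicate (n + m) 0) |m. True}" by blast
      have m1: "ff (replicate (n+1) 0) \<in> {ff (replicate (n + m) 0) |m. True}" by blast
      have e0: "ff (replicate (n+0) 0) = replicate n 1 @ [if even n then 2 else 3]"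
        using ff_rep[of n] by simp
      have r: "\<And>c. replicate (n+1) (1::nat) @ [c] = replicate n 1 @ [1, c]" by (induction n) auto
      have e1: "ff (replicate (n+1) 0) = replicate n 1 @ [1, if even (n+1) then 2 else 3]"
        by (simp only: ff_rep r)
      have p0: "prefix u (replicate n 1 @ [if even n then 2 else 3])"
        using bspec[OF h m0] unfolding e0 .
      have p1: "prefix u (replicate n 1 @ [1, if even (n+1) then 2 else 3])"
        using bspec[OF h m1] unfolding e1 .
      show "prefix u (replicate n 1)"
      proof (rule ccontr)
        assume "\<not> prefix u (replicate n 1)"
        with iffD1[OF prefix_snoc p0] have u: "u = replicate n 1 @ [if even n then 2 else 3]" by blast
        have "prefix [if even n then 2 else 3::nat] [1, if even (n+1) then 2 else 3]"
          using p1 unfolding u same_prefix_prefix .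
        then show False by (cases "even n") auto
      qed
    qed
  qed
qed

lemma fpre_rep1: "fpre {0} ff (0 # replicate i 0) = replicate (Suc i) 1"
  using fpre_rep[of "Suc i"] by simp

lemma fpre_rep0: "fpre {0} ff [0] = [1]"
  using fpre_rep[of "Suc 0"] by simp

lemma drop_rep_cons: "drop i (x # replicate i x) = [x]"
  by (induction i) auto

lemma frun_rep: "frun {0} ff (replicate n 0) = replicate n (0, [1])"
  unfolding frun_def
  by (rule nth_equalityI) (auto simp: fpre_rep fpre_rep1 fpre_rep0 drop_rep_cons min_def)

lemma fpost_rep: "fpost {0} ff (replicate n 0) [] = [if even n then 2 else 3]"
  by (simp add: fpost_def fpre_rep ff_rep)

lemma suff_rep: "m \<le> n \<Longrightarrow> suff m (replicate n s) = replicate m s"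
  unfolding suff_def
  by (simp add: drop_append)

lemma tier_rep: "tier keep (replicate n s) = (if (case s of None \<Rightarrow> True | Some a \<Rightarrow> keep a) then replicate n s else [])"
  unfolding tier_def by (induction n) auto

lemma not_tssl: "k > 0 \<Longrightarrow> \<not> fun_TSSL {0} k v ff"
proof
  assume k: "k > 0" and t: "fun_TSSL {0} k v ff"
  have x: "replicate k 0 \<in> strings {0}" "replicate (Suc k) 0 \<in> strings {0}" "[] \<in> strings {0}"
    by (auto simp: strings_def)
  have "suff (k - 1) (tier v (map Some (frun {0} ff (replicate k 0)))) =
        suff (k - 1) (tier v (map Some (frun {0} ff (replicate (Suc k) 0))))"
  proof -
    have e: "\<And>n. suff (k - 1) (tier v (map Some (frun {0} ff (replicate n 0)))) =
       (if v (0,[1]) then suff (k - 1) (replicate n (Some (0,[1]))) else suff (k - 1) [])"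
      by (simp only: frun_rep map_replicate tier_rep) simp
    have s1: "suff (k - 1) (replicate (Suc k) (Some (0,[1]))) = replicate (k-1) (Some (0,[1]))"
      by (rule suff_rep) simp
    have s2: "suff (k - 1) (replicate k (Some (0,[1]))) = replicate (k-1) (Some (0,[1]))"
      by (rule suff_rep) simp
    show ?thesis unfolding e s1 s2 by simp
  qed
  then have "fpost {0} ff (replicate k 0) [] = fpost {0} ff (replicate (Suc k) 0) []"
    using t x unfolding fun_TSSL_def by blast
  then show False unfolding fpost_rep by (cases "even k") auto
qed

theorem proposition19:
  shows "\<exists>(\<Sigma>::nat set) (\<Gamma>::nat set) (\<tau>::action \<Rightarrow> bool) (T::bsym list sfst).
     finite \<Sigma> \<and> finite \<Gamma> \<and> is_sfst T \<and> inp T = \<Sigma> \<and> outp T = \<Gamma> \<and>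
     sfst_TSSL 2 \<tau> T \<and>
     (\<forall>k>0. \<forall>\<upsilon>::action \<Rightarrow> bool. \<not> fun_TSSL \<Sigma> k \<upsilon> (sfst_fun T))"
proof (intro exI conjI)
  show "finite {0::nat}" by simp
  show "finite {1::nat,2,3}" by simp
  show "is_sfst TT" by (simp add: is_sfst_def TT_def)
  show "inp TT = {0}" by (simp add: TT_def)
  show "outp TT = {1,2,3}" by (simp add: TT_def)
  have act: "sfst_actions TT = {AA, BB}"
    by (auto simp: sfst_actions_def TT_def AA_def BB_def)
  have st: "{q. length q = 2 - 1 \<and> set q \<subseteq> insert None (Some ` {AA, BB})} = {[None],[Some AA],[Some BB]}"
    by (auto simp: length_Suc_conv)
  show "sfst_TSSL 2 (\<lambda>_. True) TT"
    unfolding sfst_TSSL_def act st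
    by (auto simp: TT_def suff_def tier_def AA_def BB_def)
  show "\<forall>k>0. \<forall>\<upsilon>. \<not> fun_TSSL {0} k \<upsilon> (sfst_fun TT)"
    using not_tssl unfolding ff_def by blast
qed

end
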